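(* Let $M$ be an oriented surface with a Riemannian metric, $A$ an $\mathfrak{su}(2)$-valued $1$-form on $M$, and $b:SM\to SU(2)$ smooth with $X(b)+Ab=0$ and finite Fourier expansion $b=\sum_{k=-N}^{N}b_k$ with $N\ge1$ and $b_{-N}\ne0$. Fix $\xi\in\mathbb{C}^2$. In local isothermal coordinates $(x,y)$ with metric $e^{2\lambda}(dx^2+dy^2)$ and the induced coordinates $(x,y,\theta)$ on $SM$, write $b_{-N}=h(x,y)e^{-iN\theta}$ and $A=A_x\,dx+A_y\,dy$, $A_{\bar z}=\tfrac12(A_x+iA_y)$. Then $$\bar\partial\big(e^{-N\lambda}h\xi\big)+A_{\bar z}\,e^{-N\lambda}h\xi=0,$$ i.e. the local section $e^{-N\lambda}h\xi\,(d\bar z)^N$ of $(M\times\mathbb{C}^2)\otimes K^{\otimes -N}$ is $\bar\partial_A$-holomorphic.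
   Context: $SM$ is the unit tangent bundle, $X$ the geodesic vector field, $V$ the vertical vector field; $A$ is regarded as the function $A(x,v)=A_x(v)$ on $SM$. $L^2(SM,\mathbb{M}_2(\mathbb{C}))=\bigoplus_{k\in\mathbb{Z}}H_k$ where $-iV$ acts as $k$ on $H_k$, and $b_k$ is the component of $b$ in $H_k$. $\theta$ is the angle between $v$ and $\partial/\partial x$, so $V=\partial/\partial\theta$. $\bar\partial=\tfrac12(\partial_x+i\partial_y)$, and $K$ is the canonical line bundle of $M$. *)

theory Defs
  imports "HOL-Analysis.Analysis"
begin

text \<open>C-infinity on an open set: all iterated partial derivatives (indexed by lists of
  basis directions) exist, with Frechet derivatives given by them.\<close>
definition smooth_on :: "'a::euclidean_space set \<Rightarrow> ('a \<Rightarrow> 'b::real_normed_vector) \<Rightarrow> bool" where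
  "smooth_on S f \<longleftrightarrow>
     (\<exists>F :: 'a list \<Rightarrow> 'a \<Rightarrow> 'b.
        (\<forall>x\<in>S. F [] x = f x) \<and>
        (\<forall>ds. \<forall>x\<in>S. (F ds has_derivative (\<lambda>v. \<Sum>i\<in>Basis. (v \<bullet> i) *\<^sub>R F (i # ds) x)) (at x)))"

definition cscale :: "complex \<Rightarrow> complex^'n \<Rightarrow> complex^'n" where
  "cscale c v = (\<chi> i. c * v $ i)"

definition cscaleM :: "complex \<Rightarrow> complex^'n^'m \<Rightarrow> complex^'n^'m" where
  "cscaleM c M = (\<chi> i j. c * M $ i $ j)"

definition cadj :: "complex^'n^'n \<Rightarrow> complex^'n^'n" where
  "cadj M = (\<chi> i j. cnj (M $ j $ i))"

definition SU2 :: "(complex^2^2) set" where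
  "SU2 = {B. cadj B ** B = mat 1 \<and> det B = 1}"

definition su2 :: "(complex^2^2) set" where
  "su2 = {A. cadj A = - A \<and> trace A = 0}"

definition pdx :: "(real \<times> real \<Rightarrow> 'b::real_normed_vector) \<Rightarrow> real \<times> real \<Rightarrow> 'b" where
  "pdx f p = frechet_derivative f (at p) (1, 0)"

definition pdy :: "(real \<times> real \<Rightarrow> 'b::real_normed_vector) \<Rightarrow> real \<times> real \<Rightarrow> 'b" where
  "pdy f p = frechet_derivative f (at p) (0, 1)"

definition pdX :: "((real \<times> real) \<times> real \<Rightarrow> 'b::real_normed_vector) \<Rightarrow> (real \<times> real) \<times> real \<Rightarrow> 'b" where
  "pdX f q = frechet_derivative f (at q) ((1, 0), 0)"

definition pdY :: "((real \<times> real) \<times> real \<Rightarrow> 'b::real_normed_vector) \<Rightarrow> (real \<times> real) \<times> real \<Rightarrow> 'b" where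
  "pdY f q = frechet_derivative f (at q) ((0, 1), 0)"

definition pdTheta :: "((real \<times> real) \<times> real \<Rightarrow> 'b::real_normed_vector) \<Rightarrow> (real \<times> real) \<times> real \<Rightarrow> 'b" where
  "pdTheta f q = frechet_derivative f (at q) ((0, 0), 1)"

text \<open>Geodesic vector field of the metric e^(2 lam)(dx^2+dy^2), in the coordinates
  (x,y,theta) where theta is the angle between v and d/dx:
  X = e^(-lam) (cos theta d_x + sin theta d_y + (- d_x lam sin theta + d_y lam cos theta) d_theta).\<close>
definition geoX :: "(real \<times> real \<Rightarrow> real) \<Rightarrow> ((real \<times> real) \<times> real \<Rightarrow> 'b::real_normed_vector)
                    \<Rightarrow> (real \<times> real) \<times> real \<Rightarrow> 'b" where
  "geoX lam f q = (case q of (p, \<theta>) \<Rightarrow>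
     exp (- lam p) *\<^sub>R (cos \<theta> *\<^sub>R pdX f q + sin \<theta> *\<^sub>R pdY f q
        + (- pdx lam p * sin \<theta> + pdy lam p * cos \<theta>) *\<^sub>R pdTheta f q))"

text \<open>The 1-form A = Ax dx + Ay dy regarded as a function on SM: A(x,v) = A_x(v),
  with the unit vector v = e^(-lam)(cos theta, sin theta).\<close>
definition A_SM :: "(real \<times> real \<Rightarrow> real) \<Rightarrow> (real \<times> real \<Rightarrow> complex^2^2) \<Rightarrow> (real \<times> real \<Rightarrow> complex^2^2)
                    \<Rightarrow> (real \<times> real) \<times> real \<Rightarrow> complex^2^2" where
  "A_SM lam Ax Ay q = (case q of (p, \<theta>) \<Rightarrow>
     exp (- lam p) *\<^sub>R (cos \<theta> *\<^sub>R Ax p + sin \<theta> *\<^sub>R Ay p))"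

definition dbar :: "(real \<times> real \<Rightarrow> complex^'n) \<Rightarrow> real \<times> real \<Rightarrow> complex^'n" where
  "dbar g p = (1/2) *\<^sub>R (pdx g p + cscale \<i> (pdy g p))"

definition A_zbar :: "(real \<times> real \<Rightarrow> complex^2^2) \<Rightarrow> (real \<times> real \<Rightarrow> complex^2^2) \<Rightarrow> real \<times> real \<Rightarrow> complex^2^2" where
  "A_zbar Ax Ay p = (1/2) *\<^sub>R (Ax p + cscaleM \<i> (Ay p))"

end

theory Submission
  imports Defs "HOL-Computational_Algebra.Polynomial"
begin


lemma unit_circle_infinite: "infinite {z::complex. \<exists>t::real. z = exp (\<i> * of_real t)}"
proof
  assume fin: "finite {z::complex. \<exists>t::real. z = exp (\<i> * of_real t)}"
  have "(\<lambda>x::real. Complex x (sqrt (1 - x^2))) ` {-1..1} \<subseteq> {z::complex. \<exists>t::real. z = exp (\<i> * of_real t)}"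
  proof
    fix z assume "z \<in> (\<lambda>x::real. Complex x (sqrt (1 - x^2))) ` {-1..1}"
    then obtain x where x: "x \<in> {-1..1}" "z = Complex x (sqrt (1 - x^2))" by auto
    have "x^2 \<le> 1" using x(1) by (simp add: abs_square_le_1 abs_le_iff)
    then have "cmod z = 1" using x(2) by (simp add: cmod_def)
    then have "z = cis (Arg z)" using cis_Arg[of z] by (cases "z = 0") (auto simp: sgn_div_norm)
    then show "z \<in> {z::complex. \<exists>t::real. z = exp (\<i> * of_real t)}" by (auto simp: cis_conv_exp)
  qed
  moreover have "inj_on (\<lambda>x::real. Complex x (sqrt (1 - x^2))) {-1..1}"
    by (auto simp: inj_on_def)
  ultimately have "finite {-1..(1::real)}"
    using fin finite_subset finite_imageD by blast
  then show False using infinite_Icc[of "-1::real" 1] by simp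
qed

lemma fourier_extract:
  fixes v w :: "int \<Rightarrow> complex" and N :: nat
  assumes "\<forall>t::real. (\<Sum>k\<in>{- int N..int N}. exp (\<i> * of_int (k+1) * of_real t) * v k
                                   + exp (\<i> * of_int (k-1) * of_real t) * w k) = 0"
  shows "w (- int N) = 0"
proof -
  define P where "P = (\<Sum>k\<in>{- int N..int N}. monom (v k) (nat (k + N + 2)) + monom (w k) (nat (k + N)))"
  have ev: "poly P (exp (\<i> * of_real t)) = 0" for t :: real
  proof -
    let ?z = "exp (\<i> * of_real t)"
    have e: "?z ^ nat m = exp (\<i> * of_int m * of_real t)" if "m \<ge> 0" for m :: int
    proof -
      have "?z ^ nat m = exp (of_nat (nat m) * (\<i> * of_real t))" by (simp only: exp_of_nat_mult)
      also have "of_nat (nat m) = (of_int m :: complex)" using that by simp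
      finally show ?thesis by (simp add: mult_ac)
    qed
    have "poly P ?z = (\<Sum>k\<in>{- int N..int N}. v k * ?z ^ nat (k + N + 2) + w k * ?z ^ nat (k + N))"
      by (simp add: P_def poly_sum poly_monom)
    also have "\<dots> = (\<Sum>k\<in>{- int N..int N}. ?z ^ (N+1) * (exp (\<i> * of_int (k+1) * of_real t) * v k
                                   + exp (\<i> * of_int (k-1) * of_real t) * w k))"
    proof (rule sum.cong[OF refl])
      fix k assume k: "k \<in> {- int N..int N}"
      have n1: "nat (int N + 1) = N + 1" by simp
      have ez: "?z ^ (N+1) = exp (\<i> * of_int (int N + 1) * of_real t)"
        using e[of "int N + 1"] unfolding n1 by simp
      have a: "?z ^ nat (k + N + 2) = ?z ^ (N+1) * exp (\<i> * of_int (k+1) * of_real t)"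
      proof -
        have "?z ^ nat (k + N + 2) = exp (\<i> * of_int (k + N + 2) * of_real t)" using k e[of "k+N+2"] by simp
        also have "\<dots> = exp (\<i> * of_int (N+1) * of_real t + \<i> * of_int (k+1) * of_real t)"
          by (simp add: algebra_simps)
        also have "\<dots> = ?z ^ (N+1) * exp (\<i> * of_int (k+1) * of_real t)"
          by (simp only: exp_add ez of_nat_add of_nat_1)
        finally show ?thesis .
      qed
      have b: "?z ^ nat (k + N) = ?z ^ (N+1) * exp (\<i> * of_int (k-1) * of_real t)"
      proof -
        have "?z ^ nat (k + N) = exp (\<i> * of_int (k + N) * of_real t)" using k e[of "k+N"] by simp
        also have "\<dots> = exp (\<i> * of_int (N+1) * of_real t + \<i> * of_int (k-1) * of_real t)"
          by (simp add: algebra_simps)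
        also have "\<dots> = ?z ^ (N+1) * exp (\<i> * of_int (k-1) * of_real t)"
          by (simp only: exp_add ez of_nat_add of_nat_1)
        finally show ?thesis .
      qed
      show "v k * ?z ^ nat (k + N + 2) + w k * ?z ^ nat (k + N) = ?z ^ (N+1) * (exp (\<i> * of_int (k+1) * of_real t) * v k
                                   + exp (\<i> * of_int (k-1) * of_real t) * w k)"
        unfolding a b by (simp add: algebra_simps)
    qed
    also have "\<dots> = 0" using assms by (simp add: sum_distrib_left[symmetric])
    finally show ?thesis .
  qed
  have "P = 0"
  proof (rule ccontr)
    assume "P \<noteq> 0"
    then have "finite {x. poly P x = 0}" by (rule poly_roots_finite)
    moreover have "{z::complex. \<exists>t::real. z = exp (\<i> * of_real t)} \<subseteq> {x. poly P x = 0}"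
      using ev by auto
    ultimately show False using unit_circle_infinite finite_subset by blast
  qed
  then have "coeff P 0 = 0" by simp
  moreover have "coeff P 0 = w (- int N)"
  proof -
    have "coeff P 0 = (\<Sum>k\<in>{- int N..int N}. (if k = - int N then w k else 0))"
      unfolding P_def coeff_sum
      by (rule sum.cong[OF refl]) (auto simp: coeff_monom)
    also have "\<dots> = w (- int N)" by (simp add: sum.delta)
    finally show ?thesis .
  qed
  ultimately show ?thesis by simp
qed


definition lf :: "complex^2 \<Rightarrow> 2 \<Rightarrow> complex^2^2 \<Rightarrow> complex^2^2 \<Rightarrow> complex" where
  "lf \<xi> r A M = ((A ** M) *v \<xi>) $ r"

lemmas lfdefs = lf_def matrix_matrix_mult_def matrix_vector_mult_def sum_2

lemma lf_add[simp]: "lf \<xi> r A (M1 + M2) = lf \<xi> r A M1 + lf \<xi> r A M2"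
  by (simp add: lfdefs algebra_simps)
lemma lf_addA[simp]: "lf \<xi> r (A1 + A2) M = lf \<xi> r A1 M + lf \<xi> r A2 M"
  by (simp add: lfdefs algebra_simps)
lemma lf_scaleR[simp]: "lf \<xi> r A (c *\<^sub>R M) = of_real c * lf \<xi> r A M"
  by (simp add: lfdefs algebra_simps) (simp add: scaleR_conv_of_real algebra_simps)
lemma lf_scaleRA[simp]: "lf \<xi> r (c *\<^sub>R A) M = of_real c * lf \<xi> r A M"
  by (simp add: lfdefs algebra_simps) (simp add: scaleR_conv_of_real algebra_simps)
lemma lf_cscaleM[simp]: "lf \<xi> r A (cscaleM c M) = c * lf \<xi> r A M"
  by (simp add: lfdefs cscaleM_def algebra_simps)
lemma lf_cscaleMA[simp]: "lf \<xi> r (cscaleM c A) M = c * lf \<xi> r A M"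
  by (simp add: lfdefs cscaleM_def algebra_simps)
lemma lf_diff[simp]: "lf \<xi> r A (M1 - M2) = lf \<xi> r A M1 - lf \<xi> r A M2"
  by (simp add: lfdefs algebra_simps)
lemma lf_uminus[simp]: "lf \<xi> r A (- M) = - lf \<xi> r A M"
  by (simp add: lfdefs algebra_simps)
lemma lf_zero[simp]: "lf \<xi> r A 0 = 0"
  by (simp add: lfdefs)
lemma lf_sum: "finite K \<Longrightarrow> lf \<xi> r A (\<Sum>k\<in>K. f k) = (\<Sum>k\<in>K. lf \<xi> r A (f k))"
  by (induction K rule: finite_induct) auto
lemma lf_mul: "lf \<xi> r (mat 1) (A ** M) = lf \<xi> r A M"
  by (simp add: lf_def matrix_mul_lid)

lemma cscaleM_decomp: "cscaleM c M = Re c *\<^sub>R M + Im c *\<^sub>R cscaleM \<i> M"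
  by (simp add: cscaleM_def vec_eq_iff) (simp add: scaleR_conv_of_real complex_eq_iff)

lemma linear_J: "linear (cscaleM \<i> :: complex^2^2 \<Rightarrow> _)"
  apply (rule linearI)
  apply (simp_all add: cscaleM_def vec_eq_iff algebra_simps)
  done
lemma bl_J: "bounded_linear (cscaleM \<i> :: complex^2^2 \<Rightarrow> _)"
  using linear_J linear_conv_bounded_linear by blast
lemma bl_mv: "bounded_linear (\<lambda>M::complex^2^2. M *v \<xi>)"
proof -
  have "linear (\<lambda>M::complex^2^2. M *v \<xi>)"
    by (rule linearI) (simp_all add: matrix_vector_mult_def vec_eq_iff algebra_simps sum.distrib sum_distrib_left, simp add: scaleR_conv_of_real sum_distrib_left algebra_simps)
  then show ?thesis using linear_conv_bounded_linear by blast
qed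

lemma smooth_diff:
  assumes "open S" "smooth_on S f" "x \<in> S"
  shows "f differentiable (at x)"
proof -
  obtain F where F: "\<forall>x\<in>S. F [] x = f x"
    "\<forall>ds. \<forall>x\<in>S. (F ds has_derivative (\<lambda>v. \<Sum>i\<in>Basis. (v \<bullet> i) *\<^sub>R F (i # ds) x)) (at x)"
    using assms(2) unfolding smooth_on_def by blast
  have "(f has_derivative (\<lambda>v. \<Sum>i\<in>Basis. (v \<bullet> i) *\<^sub>R F (i # []) x)) (at x)"
    by (rule has_derivative_transform_within_open[of "F []", OF _ assms(1) assms(3)]) (use F assms(3) in auto)
  then show ?thesis unfolding differentiable_def by blast
qed


lemma G_deriv:
  fixes h :: "int \<Rightarrow> real\<times>real \<Rightarrow> complex^2^2"
  assumes "\<And>k. k\<in>K \<Longrightarrow> (h k has_derivative L k) (at p)"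
  shows "((\<lambda>q. \<Sum>k\<in>K. cos (of_int k * snd q) *\<^sub>R h k (fst q) + sin (of_int k * snd q) *\<^sub>R cscaleM \<i> (h k (fst q)))
     has_derivative
     (\<lambda>q'. \<Sum>k\<in>K. cos (of_int k * \<theta>) *\<^sub>R L k (fst q') + sin (of_int k * \<theta>) *\<^sub>R cscaleM \<i> (L k (fst q'))
          + (snd q' * (- (of_int k * sin (of_int k * \<theta>)))) *\<^sub>R h k p
          + (snd q' * (of_int k * cos (of_int k * \<theta>))) *\<^sub>R cscaleM \<i> (h k p))) (at (p, \<theta>))"
proof -
  have J: "((\<lambda>q. cscaleM \<i> (h k (fst q))) has_derivative (\<lambda>q'. cscaleM \<i> (L k (fst q')))) (at (p,\<theta>))"
    if "k \<in> K" for k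
  proof -
    have "((\<lambda>q. h k (fst q)) has_derivative (\<lambda>q'. L k (fst q'))) (at (p,\<theta>))"
    proof -
      have "(h k has_derivative L k) (at (fst (p,\<theta>)))" using assms[OF that] by simp
      from has_derivative_compose[OF has_derivative_fst[OF has_derivative_ident] this]
      show ?thesis by simp
    qed
    then show ?thesis using bounded_linear.has_derivative[OF bl_J] by blast
  qed
  have H: "((\<lambda>q. h k (fst q)) has_derivative (\<lambda>q'. L k (fst q'))) (at (p,\<theta>))" if "k \<in> K" for k
    proof -
      have "(h k has_derivative L k) (at (fst (p,\<theta>)))" using assms[OF that] by simp
      from has_derivative_compose[OF has_derivative_fst[OF has_derivative_ident] this]
      show ?thesis by simp
    qed
  have C: "((\<lambda>q. cos (of_int k * snd q)) has_derivative (\<lambda>q'. snd q' * (- (of_int k * sin (of_int k * \<theta>))))) (at (p,\<theta>))" for k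
  proof -
    have L: "((\<lambda>q::(real\<times>real)\<times>real. of_int k * snd q) has_derivative (\<lambda>q'. of_int k * snd q')) (at (p,\<theta>))"
      by (intro has_derivative_mult_right has_derivative_snd has_derivative_ident)
    show ?thesis using has_derivative_cos[OF L] by (simp add: algebra_simps)
  qed
  have S: "((\<lambda>q. sin (of_int k * snd q)) has_derivative (\<lambda>q'. snd q' * (of_int k * cos (of_int k * \<theta>)))) (at (p,\<theta>))" for k
  proof -
    have L: "((\<lambda>q::(real\<times>real)\<times>real. of_int k * snd q) has_derivative (\<lambda>q'. of_int k * snd q')) (at (p,\<theta>))"
      by (intro has_derivative_mult_right has_derivative_snd has_derivative_ident)
    show ?thesis using has_derivative_sin[OF L] by (simp add: algebra_simps)
  qed
  show ?thesis
    apply (rule has_derivative_sum)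
    apply (rule has_derivative_eq_rhs)
     apply (rule has_derivative_add)
      apply (rule has_derivative_scaleR[OF C H], assumption)
     apply (rule has_derivative_scaleR[OF S J], assumption)
    apply (auto simp: algebra_simps fun_eq_iff)
    done
qed


lemma lf_id: "lf \<xi> r (mat 1) M = (M *v \<xi>) $ r"
  by (simp add: lf_def matrix_mul_lid)

lemma Az: "(A_zbar Ax Ay p *v (c *\<^sub>R (h *v \<xi>))) $ r = of_real c / 2 * (lf \<xi> r (Ax p) h + \<i> * lf \<xi> r (Ay p) h)"
  unfolding A_zbar_def cscaleM_def lfdefs
  by (simp add: algebra_simps) (simp add: scaleR_conv_of_real algebra_simps)

lemma E_Re[simp]: "Re (exp (\<i> * of_int k * of_real t)) = cos (of_int k * t)"
  by (simp add: Re_exp)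
lemma E_Im[simp]: "Im (exp (\<i> * of_int k * of_real t)) = sin (of_int k * t)"
  by (simp add: Im_exp)
lemma E_form: "exp (\<i> * of_int k * of_real t) = of_real (cos (of_int k * t)) + \<i> * of_real (sin (of_int k * t))"
  by (simp add: complex_eq_iff)

lemma E_shift: "E k * (of_real (cos t) * al + of_real (sin t) * be) =
     exp (\<i> * of_int (k+1) * of_real t) * ((al - \<i> * be)/2) + exp (\<i> * of_int (k-1) * of_real t) * ((al + \<i> * be)/2)"
  if "E k = exp (\<i> * of_int k * of_real t)"
proof -
  have c: "of_real (cos t) = (exp (\<i> * of_real t) + exp (- (\<i> * of_real t))) / 2"
    using cos_exp_eq[of "of_real t"] by (simp add: cos_of_real)
  have s: "of_real (sin t) = (exp (\<i> * of_real t) - exp (- (\<i> * of_real t))) / (2 * \<i>)"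
    using sin_exp_eq[of "of_real t"] by (simp add: sin_of_real)
  have e1: "exp (\<i> * of_int (k+1) * of_real t) = exp (\<i> * of_int k * of_real t) * exp (\<i> * of_real t)"
    by (simp add: exp_add[symmetric] algebra_simps)
  have e2: "exp (\<i> * of_int (k-1) * of_real t) = exp (\<i> * of_int k * of_real t) * exp (- (\<i> * of_real t))"
    by (simp add: exp_add[symmetric] algebra_simps)
  show ?thesis unfolding that c s e1 e2
    by (simp add: field_simps)
qed



theorem lemma5p1:
  fixes U :: "(real \<times> real) set"
    and lam :: "real \<times> real \<Rightarrow> real"
    and Ax Ay :: "real \<times> real \<Rightarrow> complex^2^2"
    and b :: "(real \<times> real) \<times> real \<Rightarrow> complex^2^2"
    and bk :: "int \<Rightarrow> real \<times> real \<Rightarrow> complex^2^2"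
    and N :: nat
    and \<xi> :: "complex^2"
  assumes U_open: "open U"
    and lam_smooth: "smooth_on U lam"
    and Ax_smooth: "smooth_on U Ax" and Ay_smooth: "smooth_on U Ay"
    and A_su2: "\<forall>p\<in>U. Ax p \<in> su2 \<and> Ay p \<in> su2"
    and b_smooth: "smooth_on (U \<times> UNIV) b"
    and b_SU2: "\<forall>q\<in>U \<times> UNIV. b q \<in> SU2"
    and bk_smooth: "\<forall>k. smooth_on U (bk k)"
    and N_ge: "N \<ge> 1"
    and b_fourier: "\<forall>p\<in>U. \<forall>\<theta>. b (p, \<theta>) =
                    (\<Sum>k\<in>{- int N..int N}. cscaleM (exp (\<i> * of_int k * of_real \<theta>)) (bk k p))"
    and bN_nonzero: "\<exists>p\<in>U. bk (- int N) p \<noteq> 0"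
    and transport: "\<forall>q\<in>U \<times> UNIV. geoX lam b q + A_SM lam Ax Ay q ** b q = 0"
  shows "\<forall>p\<in>U. dbar (\<lambda>p'. exp (- real N * lam p') *\<^sub>R (bk (- int N) p' *v \<xi>)) p
                 + A_zbar Ax Ay p *v (exp (- real N * lam p) *\<^sub>R (bk (- int N) p *v \<xi>)) = 0"
proof
  fix p assume pU: "p \<in> U"
  define K where "K = {- int N..int N}"
  have finK: "finite K" by (simp add: K_def)
  define L where "L k = frechet_derivative (bk k) (at p)" for k
  have bkD: "(bk k has_derivative L k) (at p)" for k
    using smooth_diff[OF U_open bk_smooth[rule_format, of k] pU] frechet_derivative_works L_def by auto
  have L0: "L k (0,0) = 0" for k
    using linear_0[OF has_derivative_linear[OF bkD[of k]]] by (simp add: zero_prod_def)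
  define Dl where "Dl = frechet_derivative lam (at p)"
  have lamD: "(lam has_derivative Dl) (at p)"
    using smooth_diff[OF U_open lam_smooth pU] frechet_derivative_works Dl_def by auto
  define lx where "lx = pdx lam p"
  define ly where "ly = pdy lam p"
  define G where "G = (\<lambda>q. \<Sum>k\<in>K. cos (of_int k * snd q) *\<^sub>R bk k (fst q) + sin (of_int k * snd q) *\<^sub>R cscaleM \<i> (bk k (fst q)))"
  have bG: "b q = G q" if "q \<in> U \<times> UNIV" for q
  proof -
    obtain p' t where q0: "q = (p', t)" by (cases q)
    then have q: "q = (p', t)" "p' \<in> U" using that by auto
    show ?thesis using b_fourier q unfolding G_def K_def
      by (simp add: cscaleM_decomp[of "exp _"])
  qed
  define Lb where "Lb \<theta> = (\<lambda>q'. \<Sum>k\<in>K. cos (of_int k * \<theta>) *\<^sub>R L k (fst q') + sin (of_int k * \<theta>) *\<^sub>R cscaleM \<i> (L k (fst q'))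
          + (snd q' * (- (of_int k * sin (of_int k * \<theta>)))) *\<^sub>R bk k p
          + (snd q' * (of_int k * cos (of_int k * \<theta>))) *\<^sub>R cscaleM \<i> (bk k p))" for \<theta>
  have bD: "frechet_derivative b (at (p, \<theta>)) = Lb \<theta>" for \<theta>
  proof -
    have "(G has_derivative Lb \<theta>) (at (p, \<theta>))"
      unfolding G_def Lb_def by (rule G_deriv) (rule bkD)
    then have "(b has_derivative Lb \<theta>) (at (p, \<theta>))"
      by (rule has_derivative_transform_within_open[OF _ open_Times[OF U_open open_UNIV]])
         (use pU bG in auto)
    then show ?thesis by (rule frechet_derivative_at[symmetric])
  qed
  show "dbar (\<lambda>p'. exp (- real N * lam p') *\<^sub>R (bk (- int N) p' *v \<xi>)) p
                 + A_zbar Ax Ay p *v (exp (- real N * lam p) *\<^sub>R (bk (- int N) p *v \<xi>)) = 0"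
  proof (rule iffD2[OF vec_eq_iff], rule allI)
    fix r :: 2
    define g where "g k = lf \<xi> r (mat 1) (bk k p)" for k
    define x where "x k = lf \<xi> r (mat 1) (L k (1,0))" for k
    define y where "y k = lf \<xi> r (mat 1) (L k (0,1))" for k
    define a where "a k = lf \<xi> r (Ax p) (bk k p)" for k
    define a' where "a' k = lf \<xi> r (Ay p) (bk k p)" for k
    define al where "al k = x k + a k + of_real ly * (\<i> * of_int k * g k)" for k
    define be where "be k = y k + a' k - of_real lx * (\<i> * of_int k * g k)" for k
    define v where "v k = (al k - \<i> * be k) / 2" for k
    define w where "w k = (al k + \<i> * be k) / 2" for k
    have "\<forall>t::real. (\<Sum>k\<in>{- int N..int N}. exp (\<i> * of_int (k+1) * of_real t) * v k
                                   + exp (\<i> * of_int (k-1) * of_real t) * w k) = 0"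
    proof
      fix t :: real
      define E where "E k = exp (\<i> * of_int k * of_real t)" for k
      have EF: "E k = of_real (cos (of_int k * t)) + \<i> * of_real (sin (of_int k * t))" for k
        unfolding E_def by (rule E_form)
      define c where "c = (of_real (cos t) :: complex)"
      define s where "s = (of_real (sin t) :: complex)"
      have pUt: "(p, t) \<in> U \<times> UNIV" using pU by simp
      have tr: "lf \<xi> r (mat 1) (geoX lam b (p,t) + A_SM lam Ax Ay (p,t) ** b (p,t)) = 0"
        using transport pUt by simp
      have PX: "lf \<xi> r (mat 1) (pdX b (p,t)) = (\<Sum>k\<in>K. E k * x k)"
        unfolding pdX_def bD Lb_def
        by (simp add: lf_sum finK, rule sum.cong, simp_all add: EF x_def algebra_simps)
      have PY: "lf \<xi> r (mat 1) (pdY b (p,t)) = (\<Sum>k\<in>K. E k * y k)"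
        unfolding pdY_def bD Lb_def
        by (simp add: lf_sum finK, rule sum.cong, simp_all add: EF y_def algebra_simps)
      have PT: "lf \<xi> r (mat 1) (pdTheta b (p,t)) = (\<Sum>k\<in>K. \<i> * of_int k * E k * g k)"
        unfolding pdTheta_def bD Lb_def
        by (simp add: lf_sum finK, rule sum.cong, simp_all add: EF g_def L0 algebra_simps)
      have PA: "lf \<xi> r (Ax p) (b (p,t)) = (\<Sum>k\<in>K. E k * a k)"
        using b_fourier pU by (simp add: lf_sum finK K_def E_def a_def)
      have PA': "lf \<xi> r (Ay p) (b (p,t)) = (\<Sum>k\<in>K. E k * a' k)"
        using b_fourier pU by (simp add: lf_sum finK K_def E_def a'_def)
      have "of_real (exp (- lam p)) * (c * (\<Sum>k\<in>K. E k * x k) + s * (\<Sum>k\<in>K. E k * y k)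
            + (- of_real lx * s + of_real ly * c) * (\<Sum>k\<in>K. \<i> * of_int k * E k * g k)
            + (c * (\<Sum>k\<in>K. E k * a k) + s * (\<Sum>k\<in>K. E k * a' k))) = 0"
        using tr unfolding lf_add lf_mul
        by (simp add: geoX_def A_SM_def PX PY PT PA PA' c_def s_def lx_def ly_def algebra_simps)
      then have eq: "c * (\<Sum>k\<in>K. E k * x k) + s * (\<Sum>k\<in>K. E k * y k)
            + (- of_real lx * s + of_real ly * c) * (\<Sum>k\<in>K. \<i> * of_int k * E k * g k)
            + (c * (\<Sum>k\<in>K. E k * a k) + s * (\<Sum>k\<in>K. E k * a' k)) = 0"
        by simp
      have "(\<Sum>k\<in>K. exp (\<i> * of_int (k+1) * of_real t) * v k
                                   + exp (\<i> * of_int (k-1) * of_real t) * w k)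
           = (\<Sum>k\<in>K. E k * (c * al k + s * be k))"
        unfolding c_def s_def v_def w_def by (rule sum.cong[OF refl], rule E_shift[symmetric], simp add: E_def)
      also have "\<dots> = (\<Sum>k\<in>K. c * (E k * x k) + s * (E k * y k)
            + (- of_real lx * s + of_real ly * c) * (\<i> * of_int k * E k * g k)
            + (c * (E k * a k) + s * (E k * a' k)))"
        by (rule sum.cong[OF refl]) (simp add: al_def be_def algebra_simps)
      also have "\<dots> = c * (\<Sum>k\<in>K. E k * x k) + s * (\<Sum>k\<in>K. E k * y k)
            + (- of_real lx * s + of_real ly * c) * (\<Sum>k\<in>K. \<i> * of_int k * E k * g k)
            + (c * (\<Sum>k\<in>K. E k * a k) + s * (\<Sum>k\<in>K. E k * a' k))"
        by (simp add: sum.distrib sum_distrib_left)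
      also have "\<dots> = 0" by (rule eq)
      finally show "(\<Sum>k\<in>{- int N..int N}. exp (\<i> * of_int (k+1) * of_real t) * v k
                                   + exp (\<i> * of_int (k-1) * of_real t) * w k) = 0"
        by (simp add: K_def)
    qed
    then have w0: "w (- int N) = 0" by (rule fourier_extract)
    show "(dbar (\<lambda>p'. exp (- real N * lam p') *\<^sub>R (bk (- int N) p' *v \<xi>)) p
                 + A_zbar Ax Ay p *v (exp (- real N * lam p) *\<^sub>R (bk (- int N) p *v \<xi>))) $ r = 0 $ r"
    proof -
      define \<Phi> where "\<Phi> = (\<lambda>p'. exp (- real N * lam p') *\<^sub>R (bk (- int N) p' *v \<xi>))"
      define e where "e = exp (- real N * lam p)"
      have expD: "((\<lambda>p'. exp (- real N * lam p')) has_derivative (\<lambda>v. e * (- real N * Dl v))) (at p)"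
        unfolding e_def
        by (rule has_derivative_eq_rhs[OF has_derivative_exp[OF has_derivative_mult_right[OF lamD]]])
           (simp add: fun_eq_iff)
      have mvD: "((\<lambda>p'. bk (- int N) p' *v \<xi>) has_derivative (\<lambda>v. L (- int N) v *v \<xi>)) (at p)"
        using bounded_linear.has_derivative[OF bl_mv bkD] by simp
      have PD: "frechet_derivative \<Phi> (at p) = (\<lambda>v. e *\<^sub>R (L (- int N) v *v \<xi>) + (e * (- real N * Dl v)) *\<^sub>R (bk (- int N) p *v \<xi>))"
        unfolding \<Phi>_def using frechet_derivative_at[OF has_derivative_scaleR[OF expD mvD]] by (simp add: e_def)
      have dx: "pdx \<Phi> p $ r = of_real e * x (- int N) - of_real e * of_real (real N * lx) * g (- int N)"
        unfolding pdx_def PD x_def g_def lf_id lx_def pdx_def Dl_def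
        by (simp add: algebra_simps) (simp add: scaleR_conv_of_real algebra_simps)
      have dy: "pdy \<Phi> p $ r = of_real e * y (- int N) - of_real e * of_real (real N * ly) * g (- int N)"
        unfolding pdy_def PD y_def g_def lf_id ly_def pdy_def Dl_def
        by (simp add: algebra_simps) (simp add: scaleR_conv_of_real algebra_simps)
      have "(dbar \<Phi> p + A_zbar Ax Ay p *v (e *\<^sub>R (bk (- int N) p *v \<xi>))) $ r
          = (pdx \<Phi> p $ r + \<i> * pdy \<Phi> p $ r) / 2 + of_real e / 2 * (a (- int N) + \<i> * a' (- int N))"
        unfolding a_def a'_def by (simp add: dbar_def cscale_def Az) (simp add: scaleR_conv_of_real)
      also have "\<dots> = of_real e * w (- int N)"
        unfolding dx dy w_def al_def be_def by (simp add: field_simps)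
      also have "\<dots> = 0" using w0 by simp
      finally show ?thesis unfolding \<Phi>_def e_def by simp
    qed
  qed
qed


end
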